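(* Let $S\subseteq\mathbb Z$ be such that every translate $S+m$ ($m\in\mathbb Z$) is a set of recurrence. If $A\subseteq\mathbb Z$ has $d^*(A)>0$ and $n\in\mathbb Z$, then $S\cap(n+A-A)$ is infinite.
   Context: $S\subseteq\mathbb Z$ is a set of recurrence if for every measure preserving system $(X,\mu,T)$ (probability space, invertible measure preserving $T$) and every measurable $D$ with $\mu(D)>0$ there exists $k\in S$ with $\mu(D\cap T^kD)>0$. $A-A=\{a-b:a,b\in A\}$ and $d^*(A)=\lim_{N\to\infty}\sup_{M\in\mathbb Z}\frac{|A\cap[M,M+N-1]|}{N}$ is the upper Banach density. *)

theory Defs
  imports "HOL-Probability.Probability"
begin

definition inv_mps :: "'a measure \<Rightarrow> ('a \<Rightarrow> 'a) \<Rightarrow> bool" where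
  "inv_mps M T \<longleftrightarrow> prob_space M \<and> T \<in> M \<rightarrow>\<^sub>M M \<and> bij_betw T (space M) (space M)
     \<and> inv_into (space M) T \<in> M \<rightarrow>\<^sub>M M
     \<and> (\<forall>A\<in>sets M. emeasure M (T -` A \<inter> space M) = emeasure M A)"

definition ipow :: "'a measure \<Rightarrow> ('a \<Rightarrow> 'a) \<Rightarrow> int \<Rightarrow> 'a \<Rightarrow> 'a" where
  "ipow M T k = (if 0 \<le> k then T ^^ nat k else (inv_into (space M) T) ^^ nat (- k))"

text \<open>The set T^k D, written as the preimage of D under T^(-k).\<close>
definition itrans :: "'a measure \<Rightarrow> ('a \<Rightarrow> 'a) \<Rightarrow> int \<Rightarrow> 'a set \<Rightarrow> 'a set" where
  "itrans M T k D = ipow M T (- k) -` D \<inter> space M"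

definition recurrence_set :: "'a itself \<Rightarrow> int set \<Rightarrow> bool" where
  "recurrence_set _ S \<longleftrightarrow>
     (\<forall>(M::'a measure) T D. inv_mps M T \<longrightarrow> D \<in> sets M \<longrightarrow> measure M D > 0 \<longrightarrow>
        (\<exists>k\<in>S. measure M (D \<inter> itrans M T k D) > 0))"

definition upper_banach_density :: "int set \<Rightarrow> real" where
  "upper_banach_density A =
     lim (\<lambda>N::nat. SUP M::int. real (card (A \<inter> {M .. M + int N - 1})) / real N)"

end

theory Submission
  imports Defs "HOL-Library.Diagonal_Subsequence"
begin

definition cnt :: "int set \<Rightarrow> int \<Rightarrow> nat \<Rightarrow> nat" where
  "cnt A M N = card (A \<inter> {M..<M + int N})"

lemma cnt_le: "cnt A M N \<le> N"
proof -
  have "cnt A M N \<le> card {M..<M + int N}" unfolding cnt_def by (intro card_mono) auto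
  thus ?thesis by simp
qed

lemma cnt_add: "cnt A M (a + b) = cnt A M a + cnt A (M + int a) b"
proof -
  have "A \<inter> {M..<M + int (a+b)} = (A \<inter> {M..<M + int a}) \<union> (A \<inter> {M + int a..<M + int a + int b})"
    by auto
  moreover have "(A \<inter> {M..<M + int a}) \<inter> (A \<inter> {M + int a..<M + int a + int b}) = {}" by auto
  ultimately show ?thesis unfolding cnt_def by (simp add: card_Un_disjoint)
qed

lemma cnt_mono: "a \<le> b \<Longrightarrow> cnt A M a \<le> cnt A M b"
  using cnt_add[of A M a "b - a"] by simp

lemma cnt_blocks:
  assumes "\<And>M'. real (cnt A M' K) \<le> C"
  shows "real (cnt A M (q * K)) \<le> q * C"
proof (induction q arbitrary: M)
  case 0 then show ?case by (simp add: cnt_def)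
next
  case (Suc q)
  have "cnt A M (Suc q * K) = cnt A M K + cnt A (M + int K) (q * K)"
    using cnt_add[of A M K "q*K"] by simp
  then show ?case using assms[of M] Suc[of "M + int K"] by (simp add: algebra_simps)
qed

lemma cnt_cover:
  assumes "K > 0" "\<And>M'. real (cnt A M' K) \<le> C"
  shows "real (cnt A M N) \<le> real (N div K + 1) * C"
proof -
  have N: "N = (N div K) * K + N mod K" by simp
  have "cnt A M N = cnt A M ((N div K) * K) + cnt A (M + int ((N div K) * K)) (N mod K)"
    using cnt_add[of A M "(N div K) * K" "N mod K"] N by simp
  moreover have "cnt A (M + int ((N div K) * K)) (N mod K) \<le> cnt A (M + int ((N div K) * K)) K"
    using assms(1) by (intro cnt_mono) simp
  ultimately show ?thesis using cnt_blocks[of A K C M "N div K", OF assms(2)] assms(2)[of "M + int ((N div K) * K)"]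
    by (simp add: algebra_simps)
qed

definition gd :: "int set \<Rightarrow> nat \<Rightarrow> real" where
  "gd A N = (SUP M::int. real (cnt A M N) / real N)"

lemma gd_bdd: "bdd_above (range (\<lambda>M::int. real (cnt A M N) / real N))"
proof (rule bdd_aboveI2[where M=1])
  fix M
  show "real (cnt A M N) / real N \<le> 1"
    using cnt_le[of A M N] by (cases "N = 0") (auto simp: divide_le_eq_1)
qed

lemma gd_ge: "real (cnt A M N) / real N \<le> gd A N"
  unfolding gd_def by (rule cSUP_upper[OF _ gd_bdd]) simp

lemma gd_nonneg: "0 \<le> gd A N"
  using gd_ge[of A 0 N] by (smt (verit) divide_nonneg_nonneg of_nat_0_le_iff)

lemma gd_le1: "gd A N \<le> 1"
  unfolding gd_def
  by (rule cSUP_least) (use cnt_le in \<open>auto simp: divide_le_eq_1\<close>)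

lemma gd_sub:
  assumes "K > 0" "N > 0"
  shows "gd A N \<le> gd A K + real K / real N"
proof -
  have C: "real (cnt A M' K) \<le> real K * gd A K" for M'
    using gd_ge[of A M' K] assms by (simp add: field_simps)
  have "real (cnt A M N) / real N \<le> gd A K + real K / real N" for M
  proof -
    have "real (cnt A M N) \<le> real (N div K + 1) * (real K * gd A K)"
      using cnt_cover[OF assms(1) C] by simp
    also have "\<dots> = real ((N div K) * K) * gd A K + real K * gd A K" by (simp add: algebra_simps)
    also have "\<dots> \<le> real N * gd A K + real K"
    proof -
      have "real ((N div K) * K) \<le> real N" by (simp only: of_nat_le_iff) (rule div_times_less_eq_dividend)
      hence "real ((N div K) * K) * gd A K \<le> real N * gd A K"
        using gd_nonneg by (intro mult_right_mono) auto
      moreover have "real K * gd A K \<le> real K" using gd_le1[of A K] by (simp add: mult_left_le)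
      ultimately show ?thesis by linarith
    qed
    finally show ?thesis using assms by (simp add: field_simps)
  qed
  thus ?thesis unfolding gd_def by (intro cSUP_least) auto
qed

lemma ubd_eq: "upper_banach_density A = lim (gd A)"
proof -
  have "{M .. M + int N - 1} = {M..<M + int N}" for M :: int and N by auto
  then show ?thesis unfolding upper_banach_density_def gd_def cnt_def by simp
qed

lemma gd_conv: "gd A \<longlonglongrightarrow> (INF K\<in>{1..}. gd A K)"
proof (rule LIMSEQ_I)
  define L where "L = (INF K\<in>{1..}. gd A K)"
  have bb: "bdd_below (gd A ` {1..})" by (rule bdd_belowI2[where m=0]) (rule gd_nonneg)
  fix r :: real assume r: "0 < r"
  have "L < L + r/2" using r by simp
  then obtain K where K: "K \<in> {1..}" "gd A K < L + r/2"
    unfolding L_def by (subst (asm) cINF_less_iff[OF _ bb]) auto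
  obtain N0 :: nat where N0: "N0 > 2 * real K / r" using reals_Archimedean2 by blast
  show "\<exists>no. \<forall>n\<ge>no. norm (gd A n - L) < r"
  proof (intro exI allI impI)
    fix n assume n: "n \<ge> max 1 N0"
    have lo: "L \<le> gd A n" unfolding L_def using n by (intro cINF_lower[OF bb]) auto
    have "real K / real n < r/2"
    proof -
      have "2 * real K / r < real n" using N0 n by linarith
      thus ?thesis using r n by (simp add: field_simps)
    qed
    moreover have "gd A n \<le> gd A K + real K / real n" using K n by (intro gd_sub) auto
    ultimately have "gd A n - L < r" "0 \<le> gd A n - L" using lo K(2) by linarith+
    thus "norm (gd A n - L) < r" by simp
  qed
qed

lemma dens:
  assumes "upper_banach_density A > 0"
  shows "\<exists>e>0. \<forall>N>0. \<exists>M. real (cnt A M N) \<ge> e * real N"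
proof -
  define L where "L = (INF K\<in>{1..}. gd A K)"
  have bb: "bdd_below (gd A ` {1..})" by (rule bdd_belowI2[where m=0]) (rule gd_nonneg)
  have "lim (gd A) = L" unfolding L_def using gd_conv by (rule limI)
  hence Lp: "L > 0" using assms ubd_eq by simp
  show ?thesis
  proof (intro exI[of _ "L/2"] conjI allI impI)
    fix N :: nat assume N: "N > 0"
    have "L \<le> gd A N" unfolding L_def using N by (intro cINF_lower[OF bb]) auto
    hence "L/2 < gd A N" using Lp by simp
    then obtain M where "L/2 < real (cnt A M N) / real N"
      unfolding gd_def by (subst (asm) less_cSUP_iff[OF _ gd_bdd]) auto
    thus "\<exists>M. L / 2 * real N \<le> real (cnt A M N)" using N by (auto simp: field_simps intro!: exI[of _ M])
  qed (use Lp in simp)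
qed

lemma bonf:
  fixes X :: "nat \<Rightarrow> 'a set" and L :: nat
  assumes "\<And>j. finite (X j)"
  shows "real (card (\<Union>j<L. X j)) \<ge> (\<Sum>j<L. real (card (X j))) - (\<Sum>j<L. \<Sum>i<j. real (card (X i \<inter> X j)))"
proof (induction L)
  case 0 then show ?case by simp
next
  case (Suc L)
  define U where "U = (\<Union>j<L. X j)"
  have fU: "finite U" unfolding U_def using assms by auto
  have eq: "(\<Union>j<Suc L. X j) = U \<union> X L" unfolding U_def lessThan_Suc by auto
  have "card (U \<union> X L) + card (U \<inter> X L) = card U + card (X L)"
    using card_Un_Int[OF fU assms[of L]] by simp
  moreover have "card (U \<inter> X L) \<le> (\<Sum>i<L. card (X i \<inter> X L))"
  proof -
    have "U \<inter> X L = (\<Union>i<L. X i \<inter> X L)" unfolding U_def by auto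
    thus ?thesis using card_UN_le[of "{..<L}" "\<lambda>i. X i \<inter> X L"] by simp
  qed
  ultimately have r1: "real (card (U \<union> X L)) + real (card (U \<inter> X L)) = real (card U) + real (card (X L))"
      and r2: "real (card (U \<inter> X L)) \<le> real (\<Sum>i<L. card (X i \<inter> X L))"
    by (metis of_nat_add, simp only: of_nat_le_iff)
  have "real (card (U \<union> X L)) \<ge> real (card U) + real (card (X L)) - (\<Sum>i<L. real (card (X i \<inter> X L)))"
    using r1 r2 by (simp add: of_nat_sum)
  with Suc.IH show ?case unfolding eq U_def by simp
qed

lemma ph:
  fixes Q :: "'p \<Rightarrow> nat \<Rightarrow> bool"
  assumes "finite P" "\<And>N. N \<ge> N1 \<Longrightarrow> \<exists>p\<in>P. Q p N"
  shows "\<exists>p\<in>P. \<forall>N0. \<exists>N\<ge>N0. Q p N"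
proof (rule ccontr)
  assume "\<not> ?thesis"
  then have "\<forall>p\<in>P. \<exists>b. \<forall>N\<ge>b. \<not> Q p N" by blast
  then obtain b where b: "\<And>p N. p \<in> P \<Longrightarrow> N \<ge> b p \<Longrightarrow> \<not> Q p N" by metis
  define N where "N = max N1 (Max (insert 0 (b ` P)))"
  have "N \<ge> N1" unfolding N_def by simp
  then obtain p where p: "p \<in> P" "Q p N" using assms(2) by blast
  have "b p \<le> N" unfolding N_def using p(1) assms(1) by (intro le_trans[OF _ max.cobounded2] Max_ge) auto
  thus False using b p by blast
qed

lemma cnt_shift_ge: "cnt A (M + int s) N + s \<ge> cnt A M N"
proof -
  have "cnt A M (s + N) = cnt A M s + cnt A (M + int s) N" by (rule cnt_add)
  moreover have "cnt A M N \<le> cnt A M (s + N)" by (rule cnt_mono) simp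
  moreover have "cnt A M s \<le> s" by (rule cnt_le)
  ultimately show ?thesis by linarith
qed

lemma card_shift: "card {t \<in> {M..<M + int N}. P (t + s)} = cnt {u. P u} (M + s) N"
proof -
  have "{u \<in> {M + s..<M + s + int N}. P u} = (\<lambda>t. t + s) ` {t \<in> {M..<M + int N}. P (t + s)}"
  proof (rule set_eqI)
    fix u show "u \<in> {u \<in> {M + s..<M + s + int N}. P u} \<longleftrightarrow> u \<in> (\<lambda>t. t + s) ` {t \<in> {M..<M + int N}. P (t + s)}"
    proof
      assume "u \<in> {u \<in> {M + s..<M + s + int N}. P u}"
      thus "u \<in> (\<lambda>t. t + s) ` {t \<in> {M..<M + int N}. P (t + s)}" by (intro image_eqI[of _ _ "u - s"]) auto
    qed auto
  qed
  moreover have "inj_on (\<lambda>t. t + s) X" for X by (auto simp: inj_on_def)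
  ultimately show ?thesis unfolding cnt_def by (simp add: card_image Int_def conj_commute)
qed

lemma residue_split:
  assumes "q > 0"
  shows "\<exists>r\<in>{0..<q}. real (cnt {u\<in>B. u mod int q = int r} M N) * real q \<ge> real (cnt B M N)"
proof (rule ccontr)
  assume "\<not> ?thesis"
  hence lt: "\<And>r. r \<in> {0..<q} \<Longrightarrow> real (cnt {u\<in>B. u mod int q = int r} M N) * real q < real (cnt B M N)"
    by force
  define S where "S = B \<inter> {M..<M + int N}"
  have fS: "finite S" unfolding S_def by simp
  have "(\<lambda>x. nat (x mod int q)) ` S \<subseteq> {0..<q}" using assms by (auto simp: nat_less_iff)
  hence "(\<Sum>r\<in>{0..<q}. card {x\<in>S. nat (x mod int q) = r}) = card S"
    using sum.group[OF fS finite_atLeastLessThan[of 0 q], of "\<lambda>x. nat (x mod int q)" "\<lambda>_. 1::nat"] assms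
    by (auto simp: nat_less_iff)
  moreover have "{x\<in>S. nat (x mod int q) = r} = {u\<in>B. u mod int q = int r} \<inter> {M..<M + int N}" for r
    unfolding S_def using assms by auto
  ultimately have "(\<Sum>r\<in>{0..<q}. real (cnt {u\<in>B. u mod int q = int r} M N)) = real (cnt B M N)"
    unfolding cnt_def S_def by (metis (no_types, lifting) of_nat_sum sum.cong)
  moreover have "(\<Sum>r\<in>{0..<q}. real (cnt {u\<in>B. u mod int q = int r} M N) * real q) < (\<Sum>r\<in>{0..<q}. real (cnt B M N))"
    using assms lt by (intro sum_strict_mono) auto
  ultimately show False by (simp add: sum_distrib_right[symmetric])
qed

lemma comb:
  assumes "e > 0" "\<And>N. N > 0 \<Longrightarrow> \<exists>M. real (cnt A M N) \<ge> e * real N" and "finite G"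
  shows "\<exists>c q E e'. - c \<notin> G \<and> q > 0 \<and> (\<forall>g\<in>G. \<bar>g + c\<bar> < int q) \<and> (\<forall>u\<in>E. u \<in> A \<and> u + c \<in> A)
     \<and> (\<forall>u\<in>E. \<forall>v\<in>E. int q dvd (u - v)) \<and> e' > 0 \<and> (\<forall>N0. \<exists>N\<ge>N0. N > 0 \<and> (\<exists>M. real (cnt E M N) \<ge> e' * real N))"
proof -
  define L :: nat where "L = nat \<lceil>2/e\<rceil> + 1"
  have L1: "L \<ge> 1" unfolding L_def by simp
  have Le: "real L * e \<ge> 2"
  proof -
    have "2/e \<le> real (nat \<lceil>2/e\<rceil>)" by linarith
    hence "2/e \<le> real L" unfolding L_def by simp
    thus ?thesis using assms(1) by (simp add: field_simps)
  qed
  define m :: int where "m = Max (insert 0 (abs ` G))"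
  have m: "\<And>g. g \<in> G \<Longrightarrow> \<bar>g\<bar> \<le> m" "m \<ge> 0" unfolding m_def using assms(3) by auto
  define d :: nat where "d = nat m + 1"
  have dm: "int d = m + 1" unfolding d_def using m(2) by simp
  have d: "\<And>g. g \<in> G \<Longrightarrow> \<bar>g\<bar> < int d" "d \<ge> 1"
  proof -
    fix g assume "g \<in> G" hence "\<bar>g\<bar> \<le> m" by (rule m(1))
    thus "\<bar>g\<bar> < int d" using dm by linarith
  qed (simp add: d_def)
  define q :: nat where "q = nat m + L * d + 1"
  define \<beta> :: real where "\<beta> = 1 / (4 * real L ^ 2)"
  have \<beta>: "\<beta> > 0" "real L ^ 2 * \<beta> = 1/4" unfolding \<beta>_def using L1 by auto
  define Ed where "Ed \<delta> r = {u. u \<in> A \<and> u + int \<delta> * int d \<in> A \<and> u mod int q = int r}" for \<delta> r :: nat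
  define N1 where "N1 = 2 * L^2 * d + 1"
  have key: "\<exists>p\<in>{1..<L} \<times> {0..<q}. \<exists>M. real (cnt (Ed (fst p) (snd p)) M N) \<ge> \<beta> / real q * real N"
    if N: "N \<ge> N1" for N
  proof -
    have N0: "N > 0" using N unfolding N1_def by simp
    obtain M where M: "real (cnt A M N) \<ge> e * real N" using assms(2)[OF N0] by blast
    define X where "X j = {t \<in> {M..<M + int N}. t + int j * int d \<in> A}" for j :: nat
    have fX: "finite (X j)" for j unfolding X_def by (rule finite_subset[of _ "{M..<M + int N}"]) auto
    have cX: "real (card (X j)) \<ge> e * real N - real j * real d" for j
    proof -
      have "card (X j) = cnt A (M + int (j * d)) N"
        unfolding X_def using card_shift[of M N "\<lambda>u. u \<in> A" "int j * int d"] by simp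
      moreover have "real (cnt A M N) \<le> real (cnt A (M + int (j * d)) N) + real j * real d"
        using cnt_shift_ge[of A M N "j * d"] by (metis of_nat_add of_nat_le_iff of_nat_mult)
      ultimately show ?thesis using M by simp
    qed
    have "\<exists>j<L. \<exists>i<j. real (card (X i \<inter> X j)) \<ge> \<beta> * real N"
    proof (rule ccontr)
      assume "\<not> ?thesis"
      hence small: "\<And>j i. j < L \<Longrightarrow> i < j \<Longrightarrow> real (card (X i \<inter> X j)) < \<beta> * real N" using not_le by blast
      have s1: "(\<Sum>j<L. \<Sum>i<j. real (card (X i \<inter> X j))) \<le> (\<Sum>j<L. \<Sum>i<L. \<beta> * real N)"
      proof (intro sum_mono)
        fix j assume j: "j \<in> {..<L}"
        have "(\<Sum>i<j. real (card (X i \<inter> X j))) \<le> (\<Sum>i<j. \<beta> * real N)"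
          using small j by (intro sum_mono) (auto intro: less_imp_le)
        also have "\<dots> \<le> (\<Sum>i<L. \<beta> * real N)"
          using j \<beta> by (intro sum_mono2) auto
        finally show "(\<Sum>i<j. real (card (X i \<inter> X j))) \<le> (\<Sum>i<L. \<beta> * real N)" .
      qed
      have s1': "(\<Sum>j<L. \<Sum>i<L. \<beta> * real N) = real N / 4"
        using \<beta>(2) by (simp add: power2_eq_square algebra_simps)
      have s2: "(\<Sum>j<L. real (card (X j))) \<ge> (\<Sum>j<L. e * real N - real L * real d)"
      proof (intro sum_mono)
        fix j assume "j \<in> {..<L}"
        hence "real j * real d \<le> real L * real d" by (intro mult_right_mono) auto
        thus "e * real N - real L * real d \<le> real (card (X j))" using cX[of j] by linarith
      qed
      have s2': "(\<Sum>j<L. e * real N - real L * real d) = real L * e * real N - real L ^ 2 * real d"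
        by (simp add: power2_eq_square algebra_simps)
      have "real L * e * real N \<ge> 2 * real N" using Le by (intro mult_right_mono) auto
      moreover have "real L ^ 2 * real d * 2 \<le> real N"
      proof -
        have "real (2 * L^2 * d) \<le> real N" using N unfolding N1_def by linarith
        thus ?thesis by simp
      qed
      moreover have "real (card (\<Union>j<L. X j)) \<le> real N"
      proof -
        have "(\<Union>j<L. X j) \<subseteq> {M..<M + int N}" unfolding X_def by auto
        hence "card (\<Union>j<L. X j) \<le> card {M..<M + int N}" by (intro card_mono) auto
        thus ?thesis by simp
      qed
      moreover note bonf[of X L, OF fX] s1 s1' s2 s2'
      moreover have "real N > 0" using N0 by simp
      ultimately show False by linarith
    qed
    then obtain i j where ij: "j < L" "i < j" "real (card (X i \<inter> X j)) \<ge> \<beta> * real N" by blast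
    define \<delta> where "\<delta> = j - i"
    have \<delta>: "\<delta> \<in> {1..<L}" unfolding \<delta>_def using ij by auto
    define B where "B = {u. u \<in> A \<and> u + int \<delta> * int d \<in> A}"
    have "X i \<inter> X j = {t \<in> {M..<M + int N}. (t + int i * int d) \<in> B}"
      unfolding X_def B_def \<delta>_def using ij by (auto simp: algebra_simps of_nat_diff)
    hence cB: "real (cnt B (M + int i * int d) N) \<ge> \<beta> * real N"
      using card_shift[of M N "\<lambda>u. u \<in> B" "int i * int d"] ij(3) by simp
    have q0: "q > 0" unfolding q_def by simp
    obtain r where r: "r \<in> {0..<q}" "real (cnt {u\<in>B. u mod int q = int r} (M + int i * int d) N) * real q \<ge> real (cnt B (M + int i * int d) N)"
      using residue_split[OF q0] by blast
    have "{u\<in>B. u mod int q = int r} = Ed \<delta> r" unfolding B_def Ed_def by auto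
    hence "real (cnt (Ed \<delta> r) (M + int i * int d) N) \<ge> \<beta> / real q * real N"
      using r cB q0 by (simp add: field_simps)
    thus ?thesis using \<delta> r(1) by (intro bexI[of _ "(\<delta>, r)"]) auto
  qed
  obtain p where p: "p \<in> {1..<L} \<times> {0..<q}"
    "\<forall>N0. \<exists>N\<ge>N0. \<exists>M. real (cnt (Ed (fst p) (snd p)) M N) \<ge> \<beta> / real q * real N"
    using ph[of "{1..<L} \<times> {0..<q}" N1 "\<lambda>p N. \<exists>M. real (cnt (Ed (fst p) (snd p)) M N) \<ge> \<beta> / real q * real N", OF _ key] by blast
  define c where "c = int (fst p) * int d"
  have p1: "fst p \<ge> 1" "fst p < L" using p(1) by (auto simp: mem_Times_iff)
  have c: "c \<ge> int d" unfolding c_def using p1(1)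
    by (metis mult_1 mult_right_mono of_nat_0_le_iff of_nat_1 of_nat_mono)
  have cG: "- c \<notin> G"
  proof
    assume "- c \<in> G" from d(1)[OF this] c show False by linarith
  qed
  have q: "q > 0" "\<forall>g\<in>G. \<bar>g + c\<bar> < int q"
  proof -
    show "q > 0" unfolding q_def by simp
    have cL: "c \<le> int L * int d" unfolding c_def using p1(2)
      by (intro mult_right_mono) auto
    have qm: "int q = m + int L * int d + 1" unfolding q_def using m(2) by simp
    have c0: "c \<ge> 0" using c by simp
    show "\<forall>g\<in>G. \<bar>g + c\<bar> < int q"
    proof
      fix g assume "g \<in> G"
      hence "\<bar>g\<bar> \<le> m" by (rule m(1))
      moreover have "\<bar>g + c\<bar> \<le> \<bar>g\<bar> + \<bar>c\<bar>" by (rule abs_triangle_ineq)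
      moreover have "\<bar>c\<bar> = c" using c0 by simp
      ultimately show "\<bar>g + c\<bar> < int q" using cL qm by linarith
    qed
  qed
  show ?thesis
  proof (intro exI conjI)
    show "- c \<notin> G" by (fact cG)
    show "q > 0" "\<forall>g\<in>G. \<bar>g + c\<bar> < int q" by (fact q)+
    show "\<forall>u\<in>Ed (fst p) (snd p). u \<in> A \<and> u + c \<in> A" unfolding Ed_def c_def by auto
    show "\<forall>u\<in>Ed (fst p) (snd p). \<forall>v\<in>Ed (fst p) (snd p). int q dvd (u - v)"
      unfolding Ed_def by (auto intro: mod_eq_dvd_iff[THEN iffD1])
    show "\<beta> / real q > 0" using \<beta> q by simp
    show "\<forall>N0. \<exists>N\<ge>N0. N > 0 \<and> (\<exists>M. real (cnt (Ed (fst p) (snd p)) M N) \<ge> \<beta> / real q * real N)"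
    proof
      fix N0
      obtain N where "N \<ge> max N0 1" "\<exists>M. real (cnt (Ed (fst p) (snd p)) M N) \<ge> \<beta> / real q * real N"
        using p(2) by blast
      thus "\<exists>N\<ge>N0. N > 0 \<and> (\<exists>M. real (cnt (Ed (fst p) (snd p)) M N) \<ge> \<beta> / real q * real N)" by auto
    qed
  qed
qed

locale corr =
  fixes E :: "int set" and Mk :: "nat \<Rightarrow> int" and Nk :: "nat \<Rightarrow> nat"
  assumes Nk: "\<And>k. Nk k > k"
begin

definition ind :: "int \<Rightarrow> real" where "ind t = (if t \<in> E then 1 else 0)"
definition pat :: "int set \<Rightarrow> int \<Rightarrow> int \<Rightarrow> real" where "pat J t = restrict (\<lambda>i. ind (t + i)) J"
definition Pat :: "int set \<Rightarrow> (int \<Rightarrow> real) set" where "Pat J = PiE J (\<lambda>_. {0,1})"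
definition Ik :: "nat \<Rightarrow> int set" where "Ik k = {Mk k..<Mk k + int (Nk k)}"
definition freq :: "nat \<Rightarrow> int set \<times> (int \<Rightarrow> real) \<Rightarrow> real" where
  "freq k Jx = (\<Sum>t\<in>Ik k. if pat (fst Jx) t = snd Jx then 1 else 0) / real (Nk k)"
definition CC :: "(int set \<times> (int \<Rightarrow> real)) set" where "CC = {(J,x). finite J \<and> x \<in> Pat J}"

lemma pat_in: "pat J t \<in> Pat J"
  unfolding pat_def Pat_def ind_def by auto

lemma finite_Pat: "finite J \<Longrightarrow> finite (Pat J)"
  unfolding Pat_def by (intro finite_PiE) auto

lemma card_Ik: "card (Ik k) = Nk k"
  unfolding Ik_def by simp

lemma Nk_pos: "real (Nk k) > 0" using Nk[of k] by simp

lemma freq_nonneg: "freq k c \<ge> 0"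
  unfolding freq_def by (intro divide_nonneg_nonneg sum_nonneg) auto

lemma freq_le1: "freq k c \<le> 1"
proof -
  have "(\<Sum>t\<in>Ik k. if pat (fst c) t = snd c then 1 else 0) \<le> (\<Sum>t\<in>Ik k. (1::real))"
    by (intro sum_mono) auto
  also have "\<dots> = real (Nk k)" using card_Ik by simp
  finally show ?thesis unfolding freq_def using Nk_pos[of k] by (simp add: divide_le_eq_1)
qed

lemma countable_CC: "countable CC"
proof -
  have eq: "CC = (\<Union>J\<in>{J. finite J}. (\<lambda>x. (J,x)) ` Pat J)" unfolding CC_def by auto
  have cnt: "countable {J::int set. finite J}" by (rule countable_Collect_finite)
  show ?thesis unfolding eq
  proof (rule countable_UN[OF cnt])
    fix J :: "int set" assume "J \<in> {J. finite J}"
    thus "countable ((\<lambda>x. (J,x)) ` Pat J)" using finite_Pat by (intro countable_finite) auto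
  qed
qed

lemma CC_ne: "CC \<noteq> {}"
proof -
  have "({}, \<lambda>_. undefined) \<in> CC" unfolding CC_def Pat_def by auto
  thus ?thesis by blast
qed

lemma ex_sub: "\<exists>\<sigma>. strict_mono \<sigma> \<and> (\<forall>c\<in>CC. convergent (\<lambda>i. freq (\<sigma> i) c))"
proof -
  define e where "e = from_nat_into CC"
  interpret S: subseqs "\<lambda>n s. convergent (\<lambda>i. freq (s i) (e n))"
  proof
    fix n and s :: "nat \<Rightarrow> nat" assume "strict_mono s"
    have "\<bar>freq (s i) (e n)\<bar> \<le> 1" for i using freq_nonneg[of "s i" "e n"] freq_le1[of "s i" "e n"] by simp
    hence "bounded (range (\<lambda>i. freq (s i) (e n)))" by (intro boundedI[where B=1]) auto
    then obtain l r where "strict_mono r" "((\<lambda>i. freq (s i) (e n)) \<circ> r) \<longlonglongrightarrow> l"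
      using bounded_imp_convergent_subsequence by blast
    thus "\<exists>r'. strict_mono r' \<and> convergent (\<lambda>i. freq ((s \<circ> r') i) (e n))"
      by (auto simp: convergent_def o_def)
  qed
  show ?thesis
  proof (intro exI conjI ballI)
    show "strict_mono S.diagseq" by (rule S.subseq_diagseq)
    fix c assume "c \<in> CC"
    then obtain n where n: "e n = c" unfolding e_def using from_nat_into_surj[OF countable_CC] by blast
    have "convergent (\<lambda>i. freq ((S.diagseq \<circ> (+) (Suc n)) i) (e n))"
      by (rule S.diagseq_holds) (auto dest: convergent_subseq_convergent simp: o_def)
    hence "convergent (\<lambda>i. freq (S.diagseq (i + Suc n)) (e n))" by (simp add: o_def add.commute)
    thus "convergent (\<lambda>i. freq (S.diagseq i) c)" using n convergent_ignore_initial_segment by blast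
  qed
qed

definition \<sigma> :: "nat \<Rightarrow> nat" where "\<sigma> = (SOME \<sigma>. strict_mono \<sigma> \<and> (\<forall>c\<in>CC. convergent (\<lambda>i. freq (\<sigma> i) c)))"

lemma \<sigma>: "strict_mono \<sigma>" "\<And>c. c \<in> CC \<Longrightarrow> convergent (\<lambda>i. freq (\<sigma> i) c)"
  using someI_ex[OF ex_sub] unfolding \<sigma>_def[symmetric] by auto

definition w :: "int set \<Rightarrow> (int \<Rightarrow> real) \<Rightarrow> real" where "w J x = lim (\<lambda>i. freq (\<sigma> i) (J, x))"

lemma w_lim: "finite J \<Longrightarrow> x \<in> Pat J \<Longrightarrow> (\<lambda>i. freq (\<sigma> i) (J, x)) \<longlonglongrightarrow> w J x"
  unfolding w_def by (rule convergent_LIMSEQ_iff[THEN iffD1], rule \<sigma>(2)) (auto simp: CC_def)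

lemma w_nonneg: "finite J \<Longrightarrow> x \<in> Pat J \<Longrightarrow> w J x \<ge> 0"
  by (rule LIMSEQ_le_const[OF w_lim]) (auto intro: freq_nonneg)

end

context corr begin

lemma freq_cons:
  assumes "J \<subseteq> H" "finite H"
  shows "freq k (J, x) = (\<Sum>y\<in>{y\<in>Pat H. restrict y J = x}. freq k (H, y))"
proof -
  define Y where "Y = {y\<in>Pat H. restrict y J = x}"
  have fY: "finite Y" unfolding Y_def using finite_Pat[OF assms(2)] by simp
  have inner: "(\<Sum>y\<in>Y. if pat H t = y then 1 else (0::real)) = (if pat J t = x then 1 else 0)" for t
  proof -
    have "(\<Sum>y\<in>Y. if pat H t = y then 1 else (0::real)) = (if pat H t \<in> Y then 1 else 0)"
      using fY by (simp add: sum.delta)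
    moreover have "pat H t \<in> Y \<longleftrightarrow> pat J t = x"
      unfolding Y_def using pat_in[of H t] assms(1) by (auto simp: pat_def restrict_def fun_eq_iff)
    ultimately show ?thesis by simp
  qed
  have "(\<Sum>y\<in>Y. freq k (H, y)) = (\<Sum>y\<in>Y. \<Sum>t\<in>Ik k. if pat H t = y then 1 else 0) / real (Nk k)"
    unfolding freq_def by (simp add: sum_divide_distrib)
  also have "\<dots> = (\<Sum>t\<in>Ik k. \<Sum>y\<in>Y. if pat H t = y then 1 else 0) / real (Nk k)"
    by (subst sum.swap) simp
  also have "\<dots> = freq k (J, x)" unfolding freq_def inner by simp
  finally show ?thesis unfolding Y_def by simp
qed

lemma w_cons:
  assumes "J \<subseteq> H" "finite H" "x \<in> Pat J"
  shows "w J x = (\<Sum>y\<in>{y\<in>Pat H. restrict y J = x}. w H y)"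
proof -
  have fJ: "finite J" using assms finite_subset by auto
  have "(\<lambda>i. (\<Sum>y\<in>{y\<in>Pat H. restrict y J = x}. freq (\<sigma> i) (H, y))) \<longlonglongrightarrow> (\<Sum>y\<in>{y\<in>Pat H. restrict y J = x}. w H y)"
    by (intro tendsto_sum w_lim assms) auto
  hence "(\<lambda>i. freq (\<sigma> i) (J, x)) \<longlonglongrightarrow> (\<Sum>y\<in>{y\<in>Pat H. restrict y J = x}. w H y)"
    using freq_cons[OF assms(1,2)] by simp
  thus ?thesis using w_lim[OF fJ assms(3)] LIMSEQ_unique by blast
qed

lemma Pat_empty: "Pat {} = {\<lambda>_. undefined}"
  unfolding Pat_def by simp

lemma w_empty: "w {} (\<lambda>_. undefined) = 1"
proof -
  have "freq k ({}, \<lambda>_. undefined) = 1" for k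
  proof -
    have "pat {} t = (\<lambda>_. undefined)" for t unfolding pat_def by auto
    hence "freq k ({}, \<lambda>_. undefined) = (\<Sum>t\<in>Ik k. 1) / real (Nk k)" unfolding freq_def by simp
    also have "\<dots> = 1" using card_Ik[of k] Nk_pos[of k] by simp
    finally show ?thesis .
  qed
  hence "(\<lambda>i. freq (\<sigma> i) ({}, \<lambda>_. undefined)) \<longlonglongrightarrow> 1" by simp
  thus ?thesis using w_lim[of "{}" "\<lambda>_. undefined"] Pat_empty LIMSEQ_unique by auto
qed

lemma w_total: "finite H \<Longrightarrow> (\<Sum>y\<in>Pat H. w H y) = 1"
  using w_cons[of "{}" H "\<lambda>_. undefined"] w_empty Pat_empty by (simp add: restrict_def)

lemma sum_shift_diff:
  fixes f :: "int \<Rightarrow> real"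
  assumes "\<And>t. 0 \<le> f t" "\<And>t. f t \<le> 1"
  shows "\<bar>(\<Sum>t\<in>{a..<a + int N}. f (t - 1)) - (\<Sum>t\<in>{a..<a + int N}. f t)\<bar> \<le> 1"
proof (cases "N = 0")
  case True then show ?thesis by simp
next
  case False
  have re: "(\<Sum>t\<in>{a..<a + int N}. f (t - 1)) = (\<Sum>t\<in>{a - 1..<a - 1 + int N}. f t)"
    by (rule sum.reindex_bij_witness[of _ "\<lambda>t. t + 1" "\<lambda>t. t - 1"]) auto
  have s1: "{a - 1..<a + int N} = insert (a - 1) {a..<a + int N}" by auto
  have s2: "{a - 1..<a + int N} = insert (a + int N - 1) {a - 1..<a - 1 + int N}" using False by auto
  have "(\<Sum>t\<in>{a - 1..<a + int N}. f t) = f (a - 1) + (\<Sum>t\<in>{a..<a + int N}. f t)"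
    unfolding s1 by (subst sum.insert) auto
  moreover have "(\<Sum>t\<in>{a - 1..<a + int N}. f t) = f (a + int N - 1) + (\<Sum>t\<in>{a - 1..<a - 1 + int N}. f t)"
    unfolding s2 by (subst sum.insert) auto
  ultimately show ?thesis unfolding re using assms[of "a - 1"] assms[of "a + int N - 1"] by linarith
qed

definition shJ :: "int set \<Rightarrow> int set" where "shJ K = (\<lambda>i. i - 1) ` K"
definition shy :: "int set \<Rightarrow> (int \<Rightarrow> real) \<Rightarrow> int \<Rightarrow> real" where
  "shy K y = restrict (\<lambda>i. y (i + 1)) (shJ K)"

lemma pat_shift:
  assumes "y \<in> Pat K"
  shows "pat (shJ K) t = shy K y \<longleftrightarrow> pat K (t - 1) = y"
proof
  assume h: "pat (shJ K) t = shy K y"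
  show "pat K (t - 1) = y"
  proof
    fix j show "pat K (t - 1) j = y j"
    proof (cases "j \<in> K")
      case True
      hence "j - 1 \<in> shJ K" unfolding shJ_def by auto
      hence "pat (shJ K) t (j - 1) = shy K y (j - 1)" using h by simp
      thus ?thesis using True \<open>j - 1 \<in> shJ K\<close> unfolding pat_def shy_def by (simp add: algebra_simps)
    next
      case False thus ?thesis using assms unfolding pat_def Pat_def by (auto simp: PiE_def extensional_def)
    qed
  qed
next
  assume h: "pat K (t - 1) = y"
  show "pat (shJ K) t = shy K y"
  proof
    fix i show "pat (shJ K) t i = shy K y i"
    proof (cases "i \<in> shJ K")
      case True
      hence "i + 1 \<in> K" unfolding shJ_def by auto
      hence "pat K (t - 1) (i + 1) = y (i + 1)" using h by simp
      thus ?thesis using True \<open>i + 1 \<in> K\<close> unfolding pat_def shy_def by (simp add: algebra_simps)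
    next
      case False thus ?thesis unfolding pat_def shy_def by simp
    qed
  qed
qed

lemma finite_shJ: "finite K \<Longrightarrow> finite (shJ K)" unfolding shJ_def by simp

lemma shy_in: "y \<in> Pat K \<Longrightarrow> shy K y \<in> Pat (shJ K)"
  unfolding Pat_def shy_def shJ_def by (auto simp: PiE_def Pi_def)

lemma freq_shift:
  assumes "y \<in> Pat K"
  shows "\<bar>freq k (shJ K, shy K y) - freq k (K, y)\<bar> \<le> 1 / real (Nk k)"
proof -
  define f where "f t = (if pat K t = y then 1 else (0::real))" for t
  have "freq k (shJ K, shy K y) = (\<Sum>t\<in>Ik k. f (t - 1)) / real (Nk k)"
    unfolding freq_def f_def using pat_shift[OF assms] by simp
  moreover have "freq k (K, y) = (\<Sum>t\<in>Ik k. f t) / real (Nk k)"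
    unfolding freq_def f_def by simp
  moreover have h: "\<bar>(\<Sum>t\<in>Ik k. f (t - 1)) - (\<Sum>t\<in>Ik k. f t)\<bar> \<le> 1"
    unfolding Ik_def by (rule sum_shift_diff) (auto simp: f_def)
  moreover have "\<bar>a / real (Nk k) - b / real (Nk k)\<bar> = \<bar>a - b\<bar> / real (Nk k)" for a b
    using Nk_pos[of k] by (simp add: diff_divide_distrib[symmetric])
  moreover have "\<bar>(\<Sum>t\<in>Ik k. f (t - 1)) - (\<Sum>t\<in>Ik k. f t)\<bar> / real (Nk k) \<le> 1 / real (Nk k)"
    using Nk_pos[of k] h by (intro divide_right_mono) auto
  ultimately show ?thesis by simp
qed

lemma w_shift:
  assumes "finite K" "y \<in> Pat K"
  shows "w (shJ K) (shy K y) = w K y"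
proof -
  have l1: "(\<lambda>i. freq (\<sigma> i) (shJ K, shy K y) - freq (\<sigma> i) (K, y)) \<longlonglongrightarrow> w (shJ K) (shy K y) - w K y"
    by (intro tendsto_diff w_lim assms finite_shJ shy_in)
  have "(\<lambda>i. freq (\<sigma> i) (shJ K, shy K y) - freq (\<sigma> i) (K, y)) \<longlonglongrightarrow> 0"
  proof (rule Lim_null_comparison)
    show "\<forall>\<^sub>F i in sequentially. norm (freq (\<sigma> i) (shJ K, shy K y) - freq (\<sigma> i) (K, y)) \<le> inverse (real (Suc i))"
    proof (rule always_eventually, rule allI)
      fix i
      have "i \<le> \<sigma> i" using \<sigma>(1) by (rule seq_suble)
      hence "Suc i \<le> Nk (\<sigma> i)" using Nk[of "\<sigma> i"] by simp
      hence "1 / real (Nk (\<sigma> i)) \<le> inverse (real (Suc i))"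
        by (simp add: divide_inverse le_imp_inverse_le del: of_nat_Suc)
      thus "norm (freq (\<sigma> i) (shJ K, shy K y) - freq (\<sigma> i) (K, y)) \<le> inverse (real (Suc i))"
        using freq_shift[OF assms(2), of "\<sigma> i"] by simp
    qed
    show "(\<lambda>i. inverse (real (Suc i))) \<longlonglongrightarrow> 0" by (rule LIMSEQ_inverse_real_of_nat)
  qed
  with l1 have "w (shJ K) (shy K y) - w K y = 0" using LIMSEQ_unique by blast
  thus ?thesis by simp
qed

lemma w_pos_ex:
  assumes "finite J" "x \<in> Pat J" "w J x > 0"
  shows "\<exists>t. pat J t = x"
proof (rule ccontr)
  assume "\<not> ?thesis"
  hence "freq k (J, x) = 0" for k unfolding freq_def by auto
  hence "(\<lambda>i. freq (\<sigma> i) (J, x)) \<longlonglongrightarrow> 0" by simp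
  hence "w J x = 0" using w_lim[OF assms(1,2)] LIMSEQ_unique by blast
  thus False using assms(3) by simp
qed

lemma w_one_gen:
  assumes "\<And>k. real (card (E \<inter> Ik k)) \<ge> e * real (Nk k)"
    and x: "x \<in> Pat {0}" and px: "\<And>t. pat {0} t = x \<longleftrightarrow> t \<in> E"
  shows "w {0} x \<ge> e"
proof -
  have "freq k ({0}, x) \<ge> e" for k
  proof -
    have "freq k ({0}, x) = (\<Sum>t\<in>Ik k. if t \<in> E then 1 else 0) / real (Nk k)"
      unfolding freq_def using px by simp
    also have "(\<Sum>t\<in>Ik k. if t \<in> E then 1 else (0::real)) = real (card (E \<inter> Ik k))"
      by (simp add: sum.If_cases Ik_def Int_commute)
    finally have F: "freq k ({0}, x) = real (card (E \<inter> Ik k)) / real (Nk k)" .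
    show ?thesis unfolding F using assms(1)[of k] Nk_pos[of k] by (simp add: le_divide_eq)
  qed
  thus ?thesis by (intro LIMSEQ_le_const[OF w_lim[OF _ x]]) auto
qed

lemma w_one:
  assumes "\<And>k. real (card (E \<inter> Ik k)) \<ge> e * real (Nk k)"
  shows "w {0} (restrict (\<lambda>_. 1) {0}) \<ge> e"
proof (rule w_one_gen[OF assms])
  show "restrict (\<lambda>_. 1) {0} \<in> Pat {0}" unfolding Pat_def by auto
  show "pat {0} t = restrict (\<lambda>_. 1) {0} \<longleftrightarrow> t \<in> E" for t
    unfolding pat_def ind_def by (auto simp: fun_eq_iff restrict_def)
qed

end

context corr begin

definition PJ :: "int set \<Rightarrow> (int \<Rightarrow> real) measure" where
  "PJ J = distr (point_measure (Pat J) (\<lambda>x. ennreal (w J x))) (PiM J (\<lambda>_. borel)) (\<lambda>x. x)"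

lemma Pat_space: "Pat J \<subseteq> space (PiM J (\<lambda>_. borel :: real measure))"
  unfolding Pat_def space_PiM by auto

lemma id_meas: "(\<lambda>x. x) \<in> point_measure (Pat J) f \<rightarrow>\<^sub>M PiM J (\<lambda>_. borel)"
  unfolding measurable_point_measure_eq1 using Pat_space by auto

lemma sets_PJ[simp]: "sets (PJ J) = sets (PiM J (\<lambda>_. borel))"
  unfolding PJ_def by simp

lemma space_PJ[simp]: "space (PJ J) = space (PiM J (\<lambda>_. borel))"
  unfolding PJ_def by simp

lemma emeasure_PJ:
  assumes "finite J" "X \<in> sets (PiM J (\<lambda>_. borel))"
  shows "emeasure (PJ J) X = ennreal (\<Sum>x\<in>Pat J \<inter> X. w J x)"
proof -
  have "emeasure (PJ J) X = emeasure (point_measure (Pat J) (\<lambda>x. ennreal (w J x))) (X \<inter> Pat J)"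
    unfolding PJ_def using assms(2) by (subst emeasure_distr[OF id_meas]) (auto simp: space_point_measure)
  also have "\<dots> = (\<Sum>x\<in>X \<inter> Pat J. ennreal (w J x))"
    using finite_Pat[OF assms(1)] by (intro emeasure_point_measure_finite) auto
  also have "\<dots> = ennreal (\<Sum>x\<in>X \<inter> Pat J. w J x)"
    using w_nonneg[OF assms(1)] by (intro sum_ennreal) auto
  finally show ?thesis by (simp add: Int_commute)
qed

lemma prob_PJ: "finite J \<Longrightarrow> prob_space (PJ J)"
proof (rule prob_spaceI)
  assume J: "finite J"
  have "emeasure (PJ J) (space (PJ J)) = ennreal (\<Sum>x\<in>Pat J \<inter> space (PiM J (\<lambda>_. borel)). w J x)"
    by (subst emeasure_PJ[OF J]) auto
  also have "Pat J \<inter> space (PiM J (\<lambda>_. borel)) = Pat J" using Pat_space by auto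
  finally show "emeasure (PJ J) (space (PJ J)) = 1" using w_total[OF J] by simp
qed

lemma proj_PJ:
  assumes JH: "J \<subseteq> H" and H: "finite H"
  shows "PJ J = distr (PJ H) (PiM J (\<lambda>_. borel)) (\<lambda>f. restrict f J)"
proof (rule measure_eqI)
  have J: "finite J" using JH H finite_subset by auto
  have rm: "(\<lambda>f. restrict f J) \<in> PJ H \<rightarrow>\<^sub>M PiM J (\<lambda>_. borel)"
    by (subst measurable_cong_sets[OF sets_PJ refl]) (rule measurable_restrict_subset[OF JH])
  show "sets (PJ J) = sets (distr (PJ H) (PiM J (\<lambda>_. borel)) (\<lambda>f. restrict f J))" by simp
  fix X assume X: "X \<in> sets (PJ J)"
  hence X': "X \<in> sets (PiM J (\<lambda>_. borel))" by simp
  have pre: "(\<lambda>f. restrict f J) -` X \<inter> space (PJ H) \<in> sets (PiM H (\<lambda>_. borel))"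
    using measurable_sets[OF rm X'] by simp
  have "emeasure (distr (PJ H) (PiM J (\<lambda>_. borel)) (\<lambda>f. restrict f J)) X
      = emeasure (PJ H) ((\<lambda>f. restrict f J) -` X \<inter> space (PJ H))"
    by (rule emeasure_distr[OF rm X'])
  also have "\<dots> = ennreal (\<Sum>y\<in>Pat H \<inter> ((\<lambda>f. restrict f J) -` X \<inter> space (PJ H)). w H y)"
    by (rule emeasure_PJ[OF H pre])
  also have "Pat H \<inter> ((\<lambda>f. restrict f J) -` X \<inter> space (PJ H)) = {y\<in>Pat H. restrict y J \<in> X}"
  proof -
    have "Pat H \<subseteq> space (PJ H)" using Pat_space[of H] by (simp only: space_PJ)
    thus ?thesis by blast
  qed
  also have "(\<Sum>y\<in>{y\<in>Pat H. restrict y J \<in> X}. w H y) = (\<Sum>x\<in>Pat J \<inter> X. w J x)"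
  proof -
    have inPat: "restrict y J \<in> Pat J" if "y \<in> Pat H" for y
      using that JH unfolding Pat_def by (auto simp: PiE_def Pi_def)
    have "(\<Sum>x\<in>Pat J \<inter> X. \<Sum>y\<in>{y\<in>{y\<in>Pat H. restrict y J \<in> X}. restrict y J = x}. w H y)
        = (\<Sum>y\<in>{y\<in>Pat H. restrict y J \<in> X}. w H y)"
    proof (rule sum.group)
      show "finite {y\<in>Pat H. restrict y J \<in> X}" using finite_Pat[OF H] by simp
      show "finite (Pat J \<inter> X)" using finite_Pat[OF J] by simp
      show "(\<lambda>y. restrict y J) ` {y\<in>Pat H. restrict y J \<in> X} \<subseteq> Pat J \<inter> X" using inPat by blast
    qed
    moreover have "(\<Sum>y\<in>{y\<in>{y\<in>Pat H. restrict y J \<in> X}. restrict y J = x}. w H y) = w J x"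
      if "x \<in> Pat J \<inter> X" for x
    proof -
      have "{y\<in>{y\<in>Pat H. restrict y J \<in> X}. restrict y J = x} = {y\<in>Pat H. restrict y J = x}"
        using that by blast
      thus ?thesis using w_cons[OF JH H, of x] that by simp
    qed
    ultimately show ?thesis by simp
  qed
  finally have D: "emeasure (distr (PJ H) (PiM J (\<lambda>_. borel)) (\<lambda>f. restrict f J)) X = ennreal (\<Sum>x\<in>Pat J \<inter> X. w J x)" .
  show "emeasure (PJ J) X = emeasure (distr (PJ H) (PiM J (\<lambda>_. borel)) (\<lambda>f. restrict f J)) X"
    unfolding D by (rule emeasure_PJ[OF J X'])
qed

lemma pp: "polish_projective UNIV PJ"
  unfolding polish_projective_def
proof (rule projective_family.intro)
  show "\<And>J H. J \<subseteq> H \<Longrightarrow> finite H \<Longrightarrow> H \<subseteq> UNIV \<Longrightarrow> PJ J = distr (PJ H) (PiM J (\<lambda>_. borel)) (\<lambda>f. restrict f J)"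
    by (rule proj_PJ)
  show "\<And>J. finite J \<Longrightarrow> J \<subseteq> UNIV \<Longrightarrow> prob_space (PJ J)" by (rule prob_PJ)
qed

end

sublocale corr \<subseteq> PP: polish_projective UNIV PJ by (rule pp)

definition Nb :: "(int \<Rightarrow> bool) measure" where "Nb = PiM UNIV (\<lambda>_. count_space UNIV)"
definition Tsh :: "(int \<Rightarrow> bool) \<Rightarrow> int \<Rightarrow> bool" where "Tsh x = (\<lambda>i. x (i + 1))"
definition Tinv :: "(int \<Rightarrow> bool) \<Rightarrow> int \<Rightarrow> bool" where "Tinv x = (\<lambda>i. x (i - 1))"
definition phi :: "(int \<Rightarrow> real) \<Rightarrow> int \<Rightarrow> bool" where "phi \<omega> = (\<lambda>i. \<omega> i = 1)"

lemma space_Nb[simp]: "space Nb = UNIV"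
  unfolding Nb_def by (simp add: space_PiM)

lemma Tsh_meas: "Tsh \<in> Nb \<rightarrow>\<^sub>M Nb"
  unfolding Nb_def Tsh_def
  by (rule measurable_PiM_single') (auto simp: space_PiM intro: measurable_component_singleton)

lemma Tinv_meas: "Tinv \<in> Nb \<rightarrow>\<^sub>M Nb"
  unfolding Nb_def Tinv_def
  by (rule measurable_PiM_single') (auto simp: space_PiM intro: measurable_component_singleton)

lemma phi_comp: "(\<lambda>\<omega>::int\<Rightarrow>real. \<omega> i = 1) \<in> PiM UNIV (\<lambda>_. borel) \<rightarrow>\<^sub>M count_space UNIV"
  by measurable

lemma phi_meas': "phi \<in> PiM UNIV (\<lambda>_. borel) \<rightarrow>\<^sub>M Nb"
  unfolding Nb_def phi_def
  by (rule measurable_PiM_single'[where f="\<lambda>i \<omega>. \<omega> i = (1::real)"]) (rule phi_comp, auto simp: space_PiM)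

lemma Tsh_Tinv[simp]: "Tsh (Tinv x) = x" "Tinv (Tsh x) = x"
  unfolding Tsh_def Tinv_def by auto

lemma borel_pre: "{r::real. (r = 1) \<in> b} \<in> sets borel"
proof -
  have "(\<lambda>r::real. r = 1) \<in> borel \<rightarrow>\<^sub>M count_space UNIV" by measurable
  from measurable_sets[OF this, of b] show ?thesis by (simp add: vimage_def)
qed

context corr begin

definition MM :: "(int \<Rightarrow> bool) measure" where "MM = distr PP.lim Nb phi"

lemma phi_meas: "phi \<in> PP.lim \<rightarrow>\<^sub>M Nb"
  by (subst measurable_cong_sets[OF PP.sets_lim refl]) (rule phi_meas')

lemma sets_MM[simp]: "sets MM = sets Nb" unfolding MM_def by simp
lemma space_MM[simp]: "space MM = UNIV" unfolding MM_def by simp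

lemma prob_MM: "prob_space MM"
  unfolding MM_def by (rule PP.P.prob_space_distr[OF phi_meas])

lemma MM_rect:
  assumes K: "finite K"
  shows "emeasure MM (prod_emb UNIV (\<lambda>_. count_space UNIV) K (PiE K B))
       = ennreal (\<Sum>x\<in>Pat K \<inter> PiE K (\<lambda>j. {r. (r = 1) \<in> B j}). w K x)"
proof -
  let ?R = "prod_emb UNIV (\<lambda>_. count_space UNIV) K (PiE K B)"
  let ?X = "PiE K (\<lambda>j. {r::real. (r = 1) \<in> B j})"
  have R: "?R \<in> sets Nb" unfolding Nb_def by (intro sets_PiM_I K) auto
  have X: "?X \<in> sets (PiM K (\<lambda>_. borel))" by (intro sets_PiM_I_finite K borel_pre)
  have pre: "phi -` ?R \<inter> space PP.lim = prod_emb UNIV (\<lambda>_. borel) K ?X"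
    by (auto simp: prod_emb_def phi_def space_PiM PiE_iff)
  have "emeasure MM ?R = emeasure PP.lim (phi -` ?R \<inter> space PP.lim)"
    unfolding MM_def by (rule emeasure_distr[OF phi_meas R])
  also have "\<dots> = emeasure (PJ K) ?X" unfolding pre by (rule PP.emeasure_lim_emb) (use K X in auto)
  also have "\<dots> = ennreal (\<Sum>x\<in>Pat K \<inter> ?X. w K x)" by (rule emeasure_PJ[OF K X])
  finally show ?thesis .
qed

lemma shJ_image: "shJ ((\<lambda>i. i + 1) ` K) = K"
  unfolding shJ_def by (force simp: image_image)

lemma sum_shift_eq:
  assumes K: "finite K"
  shows "(\<Sum>y\<in>Pat ((\<lambda>i. i + 1) ` K) \<inter> PiE ((\<lambda>i. i + 1) ` K) (\<lambda>j. C (j - 1)). w ((\<lambda>i. i + 1) ` K) y)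
       = (\<Sum>x\<in>Pat K \<inter> PiE K C. w K x)"
proof -
  define sK where "sK = (\<lambda>i::int. i + 1) ` K"
  have fsK: "finite sK" unfolding sK_def using K by simp
  have sh: "shJ sK = K" unfolding sK_def by (rule shJ_image)
  have mem_sK: "j \<in> sK \<longleftrightarrow> j - 1 \<in> K" for j unfolding sK_def by (force simp: image_iff)
  show ?thesis unfolding sK_def[symmetric]
  proof (rule sum.reindex_bij_witness[where i="\<lambda>x. restrict (\<lambda>j. x (j - 1)) sK" and j="shy sK"])
    fix a assume a: "a \<in> Pat sK \<inter> PiE sK (\<lambda>j. C (j - 1))"
    show "restrict (\<lambda>j. shy sK a (j - 1)) sK = a"
    proof
      fix j show "restrict (\<lambda>j. shy sK a (j - 1)) sK j = a j"
        using a mem_sK[of j] sh by (auto simp: shy_def PiE_def extensional_def)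
    qed
    show "shy sK a \<in> Pat K \<inter> PiE K C"
    proof -
      have "a (i + 1) \<in> C i \<and> a (i + 1) \<in> {0,1}" if "i \<in> K" for i
        using a mem_sK[of "i+1"] that by (auto simp: Pat_def PiE_def Pi_def)
      thus ?thesis using sh by (auto simp: shy_def Pat_def PiE_def Pi_def extensional_def)
    qed
    show "w K (shy sK a) = w sK a"
      using w_shift[OF fsK, of a] a sh by simp
  next
    fix b assume b: "b \<in> Pat K \<inter> PiE K C"
    show "shy sK (restrict (\<lambda>j. b (j - 1)) sK) = b"
    proof
      fix i show "shy sK (restrict (\<lambda>j. b (j - 1)) sK) i = b i"
        using b mem_sK[of "i+1"] sh by (auto simp: shy_def PiE_def extensional_def)
    qed
    show "restrict (\<lambda>j. b (j - 1)) sK \<in> Pat sK \<inter> PiE sK (\<lambda>j. C (j - 1))"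
      using b mem_sK by (auto simp: Pat_def PiE_def Pi_def)
  qed
qed

lemma MM_inv: "distr MM Nb Tsh = MM"
proof (rule measure_eqI_PiM_infinite[where I=UNIV and M="\<lambda>_. count_space UNIV"])
  show "sets (distr MM Nb Tsh) = sets (PiM UNIV (\<lambda>_. count_space UNIV))" by (simp add: Nb_def)
  show "sets MM = sets (PiM UNIV (\<lambda>_. count_space (UNIV :: bool set)))" by (simp add: Nb_def)
  have TM: "Tsh \<in> MM \<rightarrow>\<^sub>M Nb" by (subst measurable_cong_sets[OF sets_MM refl]) (rule Tsh_meas)
  show "finite_measure (distr MM Nb Tsh)"
    using prob_space.prob_space_distr[OF prob_MM TM] prob_space.finite_measure by blast
  fix B :: "int \<Rightarrow> bool set" and K :: "int set" assume K: "finite K" "K \<subseteq> UNIV"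
  let ?R = "prod_emb UNIV (\<lambda>_. count_space UNIV) K (PiE K B)"
  let ?sK = "(\<lambda>i::int. i + 1) ` K"
  have R: "?R \<in> sets Nb" unfolding Nb_def by (intro sets_PiM_I K) auto
  have pre: "Tsh -` ?R \<inter> space MM = prod_emb UNIV (\<lambda>_. count_space UNIV) ?sK (PiE ?sK (\<lambda>j. B (j - 1)))"
  proof (rule set_eqI)
    fix x
    show "x \<in> Tsh -` ?R \<inter> space MM \<longleftrightarrow> x \<in> prod_emb UNIV (\<lambda>_. count_space UNIV) ?sK (PiE ?sK (\<lambda>j. B (j - 1)))"
      by (auto simp: prod_emb_def Tsh_def space_PiM PiE_iff)
  qed
  have "emeasure (distr MM Nb Tsh) ?R = emeasure MM (Tsh -` ?R \<inter> space MM)"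
    by (rule emeasure_distr[OF TM R])
  also have "\<dots> = ennreal (\<Sum>y\<in>Pat ?sK \<inter> PiE ?sK (\<lambda>j. {r. (r = 1) \<in> B (j - 1)}). w ?sK y)"
    unfolding pre by (rule MM_rect) (use K in simp)
  also have "\<dots> = ennreal (\<Sum>x\<in>Pat K \<inter> PiE K (\<lambda>j. {r. (r = 1) \<in> B j}). w K x)"
    using sum_shift_eq[OF K(1), of "\<lambda>j. {r. (r = 1) \<in> B j}"] by simp
  also have "\<dots> = emeasure MM ?R" by (rule MM_rect[symmetric, OF K(1)])
  finally show "emeasure (distr MM Nb Tsh) ?R = emeasure MM ?R" .
qed

end

lemma inj_Tsh: "inj Tsh"
  by (metis Tsh_Tinv(2) injI)

lemma inv_Tsh: "inv_into UNIV Tsh = Tinv"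
proof
  fix y show "inv_into UNIV Tsh y = Tinv y"
    by (rule inv_into_f_eq[OF inj_Tsh]) auto
qed

lemma bij_Tsh: "bij_betw Tsh UNIV UNIV"
  by (rule bij_betwI[where g=Tinv]) auto

lemma Tsh_pow: "(Tsh ^^ n) x = (\<lambda>i. x (i + int n))"
  by (induction n arbitrary: x) (auto simp: Tsh_def algebra_simps)

lemma Tinv_pow: "(Tinv ^^ n) x = (\<lambda>i. x (i - int n))"
  by (induction n arbitrary: x) (auto simp: Tinv_def algebra_simps)

context corr begin

lemma inv_mps_MM: "inv_mps MM Tsh"
  unfolding inv_mps_def
proof (intro conjI ballI)
  show "prob_space MM" by (rule prob_MM)
  show TM: "Tsh \<in> MM \<rightarrow>\<^sub>M MM"
    by (subst measurable_cong_sets[OF sets_MM sets_MM]) (rule Tsh_meas)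
  show "bij_betw Tsh (space MM) (space MM)" using bij_Tsh by simp
  show "inv_into (space MM) Tsh \<in> MM \<rightarrow>\<^sub>M MM"
    unfolding space_MM inv_Tsh by (subst measurable_cong_sets[OF sets_MM sets_MM]) (rule Tinv_meas)
  fix A assume A: "A \<in> sets MM"
  have "emeasure MM (Tsh -` A \<inter> space MM) = emeasure (distr MM Nb Tsh) A"
    using A by (subst emeasure_distr) (auto simp: measurable_cong_sets[OF sets_MM refl] Tsh_meas)
  also have "\<dots> = emeasure MM A" by (simp only: MM_inv)
  finally show "emeasure MM (Tsh -` A \<inter> space MM) = emeasure MM A" .
qed

lemma ipow_MM: "ipow MM Tsh j x = (\<lambda>i. x (i + j))"
  unfolding ipow_def space_MM inv_Tsh by (auto simp: Tsh_pow Tinv_pow)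

lemma MM_all:
  assumes J: "finite J"
  shows "measure MM {x. \<forall>i\<in>J. x i} = w J (restrict (\<lambda>_. 1) J)"
proof -
  have eq: "{x. \<forall>i\<in>J. x i} = prod_emb UNIV (\<lambda>_. count_space UNIV) J (PiE J (\<lambda>_. {True}))"
    by (auto simp: prod_emb_def space_PiM PiE_iff fun_eq_iff restrict_def)
  have eq2: "Pat J \<inter> PiE J (\<lambda>j. {r. (r = 1) \<in> {True}}) = {restrict (\<lambda>_. 1) J}"
    unfolding Pat_def by (auto simp: PiE_iff fun_eq_iff restrict_def extensional_def)
  have "emeasure MM {x. \<forall>i\<in>J. x i} = ennreal (w J (restrict (\<lambda>_. 1) J))"
    unfolding eq MM_rect[OF J] eq2 by simp
  moreover have "w J (restrict (\<lambda>_. 1) J) \<ge> 0"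
    by (rule w_nonneg[OF J]) (auto simp: Pat_def)
  ultimately show ?thesis by (simp add: measure_def)
qed

lemma MM_sets_all: "{x. \<forall>i\<in>J. x i} \<in> sets MM" if "finite J"
proof -
  have eq: "{x. \<forall>i\<in>J. x i} = prod_emb UNIV (\<lambda>_. count_space UNIV) J (PiE J (\<lambda>_. {True}))"
    by (auto simp: prod_emb_def space_PiM PiE_iff fun_eq_iff restrict_def)
  show ?thesis unfolding eq sets_MM Nb_def by (intro sets_PiM_I that) auto
qed

end

lemma corr_main:
  assumes e: "e > 0" and hyp: "\<forall>N0. \<exists>N\<ge>N0. N > 0 \<and> (\<exists>M. real (cnt E M N) \<ge> e * real N)"
  shows "\<exists>(M::(int\<Rightarrow>bool) measure) T D. inv_mps M T \<and> D \<in> sets M \<and> measure M D > 0 \<and>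
           (\<forall>k. measure M (D \<inter> itrans M T k D) > 0 \<longrightarrow> (\<exists>u\<in>E. \<exists>v\<in>E. k = u - v))"
proof -
  have "\<forall>k. \<exists>N M. N \<ge> Suc k \<and> real (cnt E M N) \<ge> e * real N" using hyp by metis
  then obtain Nf Mf where NM: "\<And>k. Nf k \<ge> Suc k" "\<And>k. real (cnt E (Mf k) (Nf k)) \<ge> e * real (Nf k)"
    by metis
  interpret C: corr E Mf Nf by unfold_locales (use NM(1) Suc_le_eq in blast)
  define D where "D = {x::int\<Rightarrow>bool. \<forall>i\<in>{0}. x i}"
  show ?thesis
  proof (intro exI conjI allI impI)
    show "inv_mps C.MM Tsh" by (rule C.inv_mps_MM)
    show "D \<in> sets C.MM" unfolding D_def by (rule C.MM_sets_all) simp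
    have "C.w {0} (restrict (\<lambda>_. 1) {0}) \<ge> e"
      by (rule C.w_one) (use NM(2) in \<open>simp add: cnt_def C.Ik_def Int_commute\<close>)
    moreover have "measure C.MM D = C.w {0} (restrict (\<lambda>_. 1) {0})" unfolding D_def by (rule C.MM_all) simp
    ultimately show "measure C.MM D > 0" using e by linarith
    fix k assume pos: "measure C.MM (D \<inter> itrans C.MM Tsh k D) > 0"
    have "D \<inter> itrans C.MM Tsh k D = {x. \<forall>i\<in>{0, -k}. x i}"
      unfolding D_def itrans_def C.ipow_MM by auto
    hence "C.w {0, -k} (restrict (\<lambda>_. 1) {0, -k}) > 0" using pos C.MM_all[of "{0, -k}"] by simp
    then obtain t where t: "C.pat {0, -k} t = restrict (\<lambda>_. 1) {0, -k}"
      using C.w_pos_ex[of "{0, -k}" "restrict (\<lambda>_. 1) {0, -k}"] by (auto simp: C.Pat_def)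
    have "C.ind (t + 0) = 1" "C.ind (t + - k) = 1"
      using fun_cong[OF t, of 0] fun_cong[OF t, of "-k"] by (auto simp: C.pat_def)
    hence "t \<in> E" "t - k \<in> E" unfolding C.ind_def by (auto split: if_splits)
    thus "\<exists>u\<in>E. \<exists>v\<in>E. k = u - v" by (intro bexI[of _ t] bexI[of _ "t - k"]) auto
  qed
qed

lemma dvd_small: fixes k :: int assumes "q dvd k" "\<bar>k\<bar> < q" shows "k = 0"
proof (rule ccontr)
  assume "k \<noteq> 0"
  from assms(1) obtain t where t: "k = q * t" by blast
  with \<open>k \<noteq> 0\<close> have "t \<noteq> 0" by auto
  have q0: "q > 0" using assms(2) by linarith
  have "\<bar>k\<bar> = q * \<bar>t\<bar>" using t q0 by (simp add: abs_mult)
  also have "\<dots> \<ge> q" using \<open>t \<noteq> 0\<close> q0 by simp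
  finally show False using assms(2) by simp
qed

theorem lemma8p2:
  fixes S A :: "int set" and n :: int
  assumes "\<forall>m::int. recurrence_set TYPE(int \<Rightarrow> bool) ((\<lambda>s. s + m) ` S)"
    and "upper_banach_density A > 0"
  shows "infinite (S \<inter> {n + a - b | a b. a \<in> A \<and> b \<in> A})"
proof
  define F where "F = S \<inter> {n + a - b | a b. a \<in> A \<and> b \<in> A}"
  assume fin: "finite (S \<inter> {n + a - b | a b. a \<in> A \<and> b \<in> A})"
  hence fF: "finite F" unfolding F_def .
  define G where "G = (\<lambda>s. s - n) ` F"
  have fG: "finite G" unfolding G_def using fF by simp
  obtain e where e: "e > 0" "\<And>N. N > 0 \<Longrightarrow> \<exists>M. real (cnt A M N) \<ge> e * real N"
    using dens[OF assms(2)] by blast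
  obtain c q E e' where cq: "- c \<notin> G" "q > 0" "\<forall>g\<in>G. \<bar>g + c\<bar> < int q" "\<forall>u\<in>E. u \<in> A \<and> u + c \<in> A"
     "\<forall>u\<in>E. \<forall>v\<in>E. int q dvd (u - v)" "e' > 0" "\<forall>N0. \<exists>N\<ge>N0. N > 0 \<and> (\<exists>M. real (cnt E M N) \<ge> e' * real N)"
    using comb[OF e fG] by blast
  obtain MM :: "(int \<Rightarrow> bool) measure" and T D where sys: "inv_mps MM T" "D \<in> sets MM" "measure MM D > 0"
    "\<forall>k. measure MM (D \<inter> itrans MM T k D) > 0 \<longrightarrow> (\<exists>u\<in>E. \<exists>v\<in>E. k = u - v)"
    using corr_main[OF cq(6,7)] by blast
  have "recurrence_set TYPE(int \<Rightarrow> bool) ((\<lambda>s. s + (- n + c)) ` S)" using assms(1) by blast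
  then obtain k where k: "k \<in> (\<lambda>s. s + (- n + c)) ` S" "measure MM (D \<inter> itrans MM T k D) > 0"
    unfolding recurrence_set_def using sys(1,2,3) by blast
  then obtain s where s: "s \<in> S" "k = s - n + c" by auto
  obtain u v where uv: "u \<in> E" "v \<in> E" "k = u - v" using sys(4) k(2) by blast
  have "s = n + u - (v + c)" using s(2) uv(3) by linarith
  hence "s \<in> F" unfolding F_def using s(1) cq(4) uv(1,2) by blast
  hence g: "s - n \<in> G" unfolding G_def by blast
  have "\<bar>k\<bar> < int q" using cq(3) g s(2) by (metis add.commute add_diff_eq diff_add_eq)
  moreover have "int q dvd k" using cq(5) uv by simp
  ultimately have "k = 0" using dvd_small by blast
  hence "s - n = - c" using s(2) by simp
  thus False using g cq(1) by simp
qed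

end
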